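(* Let $\{F_x : x\in V(G)\}$ be a representation of a restricted frame graph $G$, and let $C$ be an induced cycle of $G$. Then there is a vertex $v\in V(C)$ such that $F_v$ contains the frame of every vertex in $V(C)\setminus N[v]$. Moreover, if $u\in V(C)$, $u\neq v$, is another vertex such that $F_u$ contains the frame of every vertex in $V(C)\setminus N[u]$, then $u$ is adjacent to $v$.
   Context: $N[v]=\{v\}\cup N(v)$. A frame is the boundary of an axis-parallel box $I\times J\subset\mathbb R^2$. A representation of a graph $G$ as a restricted frame graph is a family of frames $\{F_x : x\in V(G)\}$ with $xy\in E(G)$ iff $F_x\cap F_y\neq\emptyset$, satisfying: (1) corners of a frame do not coincide with any point of another frame; (2) the left side of any frame does not intersect any other frame; (3) if the right side of a frame intersects a second frame, this right side intersects both the top and the bottom side of the second frame; (4) if two frames have non-empty intersection, then no frame is entirely contained in the intersection of the two regions bounded by these two frames. A frame $F_1$ contains a frame $F_2$ if $F_1\cap F_2=\emptyset$ and $F_2$ lies in the region bounded by $F_1$. *)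

theory Defs
  imports Complex_Main
begin

text \<open>A frame is the boundary of an axis-parallel box [x1,x2] x [y1,y2] in the plane
  (points are pairs of reals). We record a frame by its four coordinates.\<close>

record frame =
  fx1 :: real
  fx2 :: real
  fy1 :: real
  fy2 :: real

definition valid_frame :: "frame \<Rightarrow> bool" where
  "valid_frame F \<longleftrightarrow> fx1 F < fx2 F \<and> fy1 F < fy2 F"

definition left_side :: "frame \<Rightarrow> (real \<times> real) set" where
  "left_side F = {(x, y). x = fx1 F \<and> fy1 F \<le> y \<and> y \<le> fy2 F}"

definition right_side :: "frame \<Rightarrow> (real \<times> real) set" where
  "right_side F = {(x, y). x = fx2 F \<and> fy1 F \<le> y \<and> y \<le> fy2 F}"

definition bottom_side :: "frame \<Rightarrow> (real \<times> real) set" where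
  "bottom_side F = {(x, y). y = fy1 F \<and> fx1 F \<le> x \<and> x \<le> fx2 F}"

definition top_side :: "frame \<Rightarrow> (real \<times> real) set" where
  "top_side F = {(x, y). y = fy2 F \<and> fx1 F \<le> x \<and> x \<le> fx2 F}"

definition frame_set :: "frame \<Rightarrow> (real \<times> real) set" where
  "frame_set F = left_side F \<union> right_side F \<union> bottom_side F \<union> top_side F"

definition corners :: "frame \<Rightarrow> (real \<times> real) set" where
  "corners F = {(fx1 F, fy1 F), (fx1 F, fy2 F), (fx2 F, fy1 F), (fx2 F, fy2 F)}"

definition region :: "frame \<Rightarrow> (real \<times> real) set" where
  "region F = {(x, y). fx1 F \<le> x \<and> x \<le> fx2 F \<and> fy1 F \<le> y \<and> y \<le> fy2 F}"

definition frame_contains :: "frame \<Rightarrow> frame \<Rightarrow> bool" where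
  "frame_contains F1 F2 \<longleftrightarrow> frame_set F1 \<inter> frame_set F2 = {} \<and> frame_set F2 \<subseteq> region F1"

definition simple_graph :: "'v set \<Rightarrow> ('v \<Rightarrow> 'v \<Rightarrow> bool) \<Rightarrow> bool" where
  "simple_graph V adj \<longleftrightarrow> finite V \<and>
     (\<forall>x y. adj x y \<longrightarrow> x \<in> V \<and> y \<in> V \<and> x \<noteq> y \<and> adj y x)"

definition closed_nbhd :: "('v \<Rightarrow> 'v \<Rightarrow> bool) \<Rightarrow> 'v \<Rightarrow> 'v set" where
  "closed_nbhd adj v = {v} \<union> {u. adj v u}"

definition restricted_frame_rep :: "'v set \<Rightarrow> ('v \<Rightarrow> 'v \<Rightarrow> bool) \<Rightarrow> ('v \<Rightarrow> frame) \<Rightarrow> bool" where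
  "restricted_frame_rep V adj F \<longleftrightarrow>
     (\<forall>x\<in>V. valid_frame (F x)) \<and>
     (\<forall>x\<in>V. \<forall>y\<in>V. x \<noteq> y \<longrightarrow> (adj x y \<longleftrightarrow> frame_set (F x) \<inter> frame_set (F y) \<noteq> {})) \<and>
     (\<forall>x\<in>V. \<forall>y\<in>V. x \<noteq> y \<longrightarrow> corners (F x) \<inter> frame_set (F y) = {}) \<and>
     (\<forall>x\<in>V. \<forall>y\<in>V. x \<noteq> y \<longrightarrow> left_side (F x) \<inter> frame_set (F y) = {}) \<and>
     (\<forall>x\<in>V. \<forall>y\<in>V. x \<noteq> y \<longrightarrow> right_side (F x) \<inter> frame_set (F y) \<noteq> {} \<longrightarrow>
        right_side (F x) \<inter> top_side (F y) \<noteq> {} \<and> right_side (F x) \<inter> bottom_side (F y) \<noteq> {}) \<and>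
     (\<forall>x\<in>V. \<forall>y\<in>V. x \<noteq> y \<longrightarrow> frame_set (F x) \<inter> frame_set (F y) \<noteq> {} \<longrightarrow>
        (\<forall>z\<in>V. z \<noteq> x \<and> z \<noteq> y \<longrightarrow> \<not> frame_set (F z) \<subseteq> region (F x) \<inter> region (F y)))"

definition induced_cycle :: "'v set \<Rightarrow> ('v \<Rightarrow> 'v \<Rightarrow> bool) \<Rightarrow> 'v list \<Rightarrow> bool" where
  "induced_cycle V adj cs \<longleftrightarrow> length cs \<ge> 3 \<and> distinct cs \<and> set cs \<subseteq> V \<and>
     (\<forall>i<length cs. \<forall>j<length cs.
        adj (cs ! i) (cs ! j) \<longleftrightarrow> (j = Suc i mod length cs \<or> i = Suc j mod length cs))"

end

theory Submission
  imports Defs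
begin

lemma mem_frame:
  "((a,b) \<in> frame_set F) \<longleftrightarrow>
     ((a = fx1 F \<or> a = fx2 F) \<and> fy1 F \<le> b \<and> b \<le> fy2 F) \<or>
     ((b = fy1 F \<or> b = fy2 F) \<and> fx1 F \<le> a \<and> a \<le> fx2 F)"
  by (auto simp: frame_set_def left_side_def right_side_def top_side_def bottom_side_def)

lemma inside_pt:
  assumes d: "frame_set A \<inter> frame_set B = {}" and vB: "valid_frame B"
    and p: "(px,py) \<in> frame_set B" and h: "fx1 A < px" "px < fx2 A" "fy1 A < py" "py < fy2 A"
  shows "fx1 A \<le> fx1 B \<and> fx2 B \<le> fx2 A \<and> fy1 A \<le> fy1 B \<and> fy2 B \<le> fy2 A"
proof -
  have D: "\<And>a b. (a,b) \<in> frame_set A \<Longrightarrow> (a,b) \<in> frame_set B \<Longrightarrow> False" using d by blast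
  note D1 = D[of "fx1 A" "fy2 B"] D[of "fx1 A" "fy1 B"] D[of px "fy2 A"] D[of px "fy1 A"]
    D[of "fx2 A" "fy2 B"] D[of "fx2 A" "fy1 B"]
    D[of "fx1 B" "fy1 A"] D[of "fx2 B" "fy1 A"] D[of "fx1 A" py] D[of "fx2 A" py]
    D[of "fx1 B" "fy2 A"] D[of "fx2 B" "fy2 A"]
  show ?thesis using D1 p vB h unfolding mem_frame valid_frame_def by smt
qed

definition pierce :: "frame \<Rightarrow> frame \<Rightarrow> bool" where
  "pierce X Y \<longleftrightarrow> fx1 X < fx1 Y \<and> fx1 Y < fx2 X \<and> fx2 X < fx2 Y \<and> fy1 X < fy1 Y \<and> fy2 Y < fy2 X"

lemma pierce_right:
  assumes vX: "valid_frame X" and vY: "valid_frame Y"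
    and c2: "corners Y \<inter> frame_set X = {}" and c1: "corners X \<inter> frame_set Y = {}"
    and l1: "left_side X \<inter> frame_set Y = {}"
    and t: "right_side X \<inter> top_side Y \<noteq> {}" and b: "right_side X \<inter> bottom_side Y \<noteq> {}"
  shows "pierce X Y"
proof -
  have t': "fx1 Y \<le> fx2 X \<and> fx2 X \<le> fx2 Y \<and> fy1 X \<le> fy2 Y \<and> fy2 Y \<le> fy2 X"
    using t by (auto simp: right_side_def top_side_def)
  have b': "fy1 X \<le> fy1 Y \<and> fy1 Y \<le> fy2 X"
    using b by (auto simp: right_side_def bottom_side_def)
  have C2: "\<And>p. p \<in> corners Y \<Longrightarrow> p \<in> frame_set X \<Longrightarrow> False" using c2 by blast
  have C1: "\<And>p. p \<in> corners X \<Longrightarrow> p \<in> frame_set Y \<Longrightarrow> False" using c1 by blast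
  have L: "\<And>p. p \<in> left_side X \<Longrightarrow> p \<in> frame_set Y \<Longrightarrow> False" using l1 by blast
  note I = C2[of "(fx1 Y, fy2 Y)"] C2[of "(fx2 Y, fy2 Y)"] C1[of "(fx2 X, fy2 X)"] C1[of "(fx2 X, fy1 X)"]
     L[of "(fx1 X, fy2 Y)"]
  show ?thesis using I t' b' vX vY unfolding pierce_def mem_frame corners_def left_side_def valid_frame_def
    by (smt (verit) insert_iff case_prodI mem_Collect_eq)
qed

lemma orient:
  assumes vX: "valid_frame X" and vY: "valid_frame Y"
    and c1: "corners X \<inter> frame_set Y = {}" and c2: "corners Y \<inter> frame_set X = {}"
    and l1: "left_side X \<inter> frame_set Y = {}" and l2: "left_side Y \<inter> frame_set X = {}"
    and r1: "right_side X \<inter> frame_set Y \<noteq> {} \<longrightarrow>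
        right_side X \<inter> top_side Y \<noteq> {} \<and> right_side X \<inter> bottom_side Y \<noteq> {}"
    and r2: "right_side Y \<inter> frame_set X \<noteq> {} \<longrightarrow>
        right_side Y \<inter> top_side X \<noteq> {} \<and> right_side Y \<inter> bottom_side X \<noteq> {}"
    and i: "frame_set X \<inter> frame_set Y \<noteq> {}"
  shows "pierce X Y \<or> pierce Y X"
proof -
  obtain a b where ab: "(a,b) \<in> frame_set X" "(a,b) \<in> frame_set Y" using i by auto
  show ?thesis
  proof (cases "(a,b) \<in> right_side X")
    case True
    then have "right_side X \<inter> frame_set Y \<noteq> {}" using ab by blast
    then show ?thesis using r1 pierce_right[OF vX vY c2 c1 l1] by blast
  next
    case nX: False
    show ?thesis
    proof (cases "(a,b) \<in> right_side Y")
      case True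
      then have "right_side Y \<inter> frame_set X \<noteq> {}" using ab by blast
      then show ?thesis using r2 pierce_right[OF vY vX c1 c2 l2] by blast
    next
      case nY: False
      have lx: "(a,b) \<notin> left_side X" using l1 ab by blast
      have ly: "(a,b) \<notin> left_side Y" using l2 ab by blast
      have C2: "\<And>p. p \<in> corners Y \<Longrightarrow> p \<in> frame_set X \<Longrightarrow> False" using c2 by blast
      have C1: "\<And>p. p \<in> corners X \<Longrightarrow> p \<in> frame_set Y \<Longrightarrow> False" using c1 by blast
      have hx: "(b = fy1 X \<or> b = fy2 X) \<and> fx1 X \<le> a \<and> a \<le> fx2 X"
        using ab(1) nX lx by (auto simp: frame_set_def left_side_def right_side_def top_side_def bottom_side_def)
      have hy: "(b = fy1 Y \<or> b = fy2 Y) \<and> fx1 Y \<le> a \<and> a \<le> fx2 Y"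
        using ab(2) nY ly by (auto simp: frame_set_def left_side_def right_side_def top_side_def bottom_side_def)
      have k1: "(fx1 X, b) \<in> corners X" using hx by (auto simp: corners_def)
      have k2: "(fx1 Y, b) \<in> corners Y" using hy by (auto simp: corners_def)
      show ?thesis
      proof (cases "fx1 X \<le> fx1 Y")
        case True
        then have "(fx1 Y, b) \<in> frame_set X" using hx hy unfolding mem_frame by auto
        then show ?thesis using C2 k2 by blast
      next
        case False
        then have "(fx1 X, b) \<in> frame_set Y" using hx hy unfolding mem_frame by auto
        then show ?thesis using C1 k1 by blast
      qed
    qed
  qed
qed

lemma contains_coords:
  assumes "frame_contains A B" "valid_frame B"
  shows "fx1 A \<le> fx1 B \<and> fx2 B \<le> fx2 A \<and> fy1 A \<le> fy1 B \<and> fy2 B \<le> fy2 A"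
proof -
  have "(fx1 B, fy1 B) \<in> frame_set B" "(fx2 B, fy2 B) \<in> frame_set B"
    using assms(2) unfolding mem_frame valid_frame_def by auto
  then have "(fx1 B, fy1 B) \<in> region A" "(fx2 B, fy2 B) \<in> region A"
    using assms(1) unfolding frame_contains_def by auto
  then show ?thesis unfolding region_def by auto
qed

lemma contains_intro:
  assumes vB: "valid_frame B" and "frame_set A \<inter> frame_set B = {}"
    "fx1 A \<le> fx1 B \<and> fx2 B \<le> fx2 A \<and> fy1 A \<le> fy1 B \<and> fy2 B \<le> fy2 A"
  shows "frame_contains A B"
proof -
  have "frame_set B \<subseteq> region A"
  proof
    fix p assume "p \<in> frame_set B"
    then show "p \<in> region A" using assms(3) vB unfolding region_def valid_frame_def
      by (cases p) (auto simp: mem_frame)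
  qed
  then show ?thesis using assms(2) unfolding frame_contains_def by blast
qed

lemma contains_antisym:
  assumes "frame_contains A B" "frame_contains B A" "valid_frame A" "valid_frame B"
  shows False
proof -
  have "fx1 A = fx1 B" "fy1 A = fy1 B" "fy2 A = fy2 B"
    using contains_coords[OF assms(1,4)] contains_coords[OF assms(2,3)] by auto
  then have "(fx1 B, fy1 B) \<in> frame_set A" "(fx1 B, fy1 B) \<in> frame_set B"
    using assms(3,4) unfolding mem_frame valid_frame_def by auto
  then show False using assms(1) unfolding frame_contains_def by blast
qed

lemma propagate:
  assumes vY: "valid_frame Y" and c: "frame_contains V X"
    and i: "frame_set X \<inter> frame_set Y \<noteq> {}" and d: "frame_set V \<inter> frame_set Y = {}"
  shows "frame_contains V Y"
proof -
  obtain a b where ab: "(a,b) \<in> frame_set X" "(a,b) \<in> frame_set Y" using i by auto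
  have r: "(a,b) \<in> region V" using c ab unfolding frame_contains_def by auto
  have n: "(a,b) \<notin> frame_set V" using c ab unfolding frame_contains_def by auto
  have s: "fx1 V < a" "a < fx2 V" "fy1 V < b" "b < fy2 V"
    using r n unfolding region_def mem_frame by auto
  show ?thesis using contains_intro[OF vY d inside_pt[OF d vY ab(2) s]] .
qed

lemma lemB:
  assumes vA: "valid_frame A" and vC: "valid_frame C" and vB: "valid_frame B"
    and p1: "pierce A B" and p2: "pierce C B" and d: "frame_set A \<inter> frame_set C = {}"
  shows "frame_contains A C \<or> frame_contains C A"
proof -
  have D: "\<And>a b. (a,b) \<in> frame_set A \<Longrightarrow> (a,b) \<in> frame_set C \<Longrightarrow> False" using d by blast
  have ne: "fx2 A \<noteq> fx2 C"
  proof
    assume "fx2 A = fx2 C"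
    then show False using D[of "fx2 A" "fy1 B"] p1 p2 vB unfolding pierce_def mem_frame valid_frame_def by (smt (verit))
  qed
  show ?thesis
  proof (cases "fx2 C < fx2 A")
    case True
    have m: "(fx2 C, fy1 B) \<in> frame_set C" using p2 vB unfolding pierce_def mem_frame valid_frame_def by auto
    have s: "fx1 A < fx2 C" "fx2 C < fx2 A" "fy1 A < fy1 B" "fy1 B < fy2 A"
      using True p1 p2 vB unfolding pierce_def valid_frame_def by auto
    show ?thesis using contains_intro[OF vC d inside_pt[OF d vC m s]] by blast
  next
    case False
    then have True': "fx2 A < fx2 C" using ne by auto
    have d': "frame_set C \<inter> frame_set A = {}" using d by blast
    have m: "(fx2 A, fy1 B) \<in> frame_set A" using p1 vB unfolding pierce_def mem_frame valid_frame_def by auto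
    have s: "fx1 C < fx2 A" "fx2 A < fx2 C" "fy1 C < fy1 B" "fy1 B < fy2 C"
      using True' p1 p2 vB unfolding pierce_def valid_frame_def by auto
    show ?thesis using contains_intro[OF vA d' inside_pt[OF d' vA m s]] by blast
  qed
qed

lemma mod2: "(m::nat) < 2 * n \<Longrightarrow> m mod n = (if m < n then m else m - n)"
  by (simp add: le_mod_geq)

context
  fixes V :: "'v set" and adj :: "'v \<Rightarrow> 'v \<Rightarrow> bool" and F :: "'v \<Rightarrow> frame" and cs :: "'v list"
  assumes G: "simple_graph V adj"
    and R: "restricted_frame_rep V adj F"
    and C: "induced_cycle V adj cs"
begin

lemma symm: "adj x y \<Longrightarrow> adj y x" using G unfolding simple_graph_def by blast

lemma valid: "x \<in> V \<Longrightarrow> valid_frame (F x)" using R unfolding restricted_frame_rep_def by simp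

lemma adj_iff: "x \<in> V \<Longrightarrow> y \<in> V \<Longrightarrow> x \<noteq> y \<Longrightarrow> adj x y \<longleftrightarrow> frame_set (F x) \<inter> frame_set (F y) \<noteq> {}"
  using R unfolding restricted_frame_rep_def by simp

lemma Rparts: "(\<forall>x\<in>V. valid_frame (F x)) \<and>
     (\<forall>x\<in>V. \<forall>y\<in>V. x \<noteq> y \<longrightarrow> (adj x y \<longleftrightarrow> frame_set (F x) \<inter> frame_set (F y) \<noteq> {})) \<and>
     (\<forall>x\<in>V. \<forall>y\<in>V. x \<noteq> y \<longrightarrow> corners (F x) \<inter> frame_set (F y) = {}) \<and>
     (\<forall>x\<in>V. \<forall>y\<in>V. x \<noteq> y \<longrightarrow> left_side (F x) \<inter> frame_set (F y) = {}) \<and>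
     (\<forall>x\<in>V. \<forall>y\<in>V. x \<noteq> y \<longrightarrow> right_side (F x) \<inter> frame_set (F y) \<noteq> {} \<longrightarrow>
        right_side (F x) \<inter> top_side (F y) \<noteq> {} \<and> right_side (F x) \<inter> bottom_side (F y) \<noteq> {})"
  using R unfolding restricted_frame_rep_def by (elim conjE) (intro conjI)

lemma corn: "x \<in> V \<Longrightarrow> y \<in> V \<Longrightarrow> x \<noteq> y \<Longrightarrow> corners (F x) \<inter> frame_set (F y) = {}"
  using Rparts by simp
lemma lft: "x \<in> V \<Longrightarrow> y \<in> V \<Longrightarrow> x \<noteq> y \<Longrightarrow> left_side (F x) \<inter> frame_set (F y) = {}"
  using Rparts by simp
lemma rgt: "x \<in> V \<Longrightarrow> y \<in> V \<Longrightarrow> x \<noteq> y \<Longrightarrow> right_side (F x) \<inter> frame_set (F y) \<noteq> {} \<longrightarrow>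
        right_side (F x) \<inter> top_side (F y) \<noteq> {} \<and> right_side (F x) \<inter> bottom_side (F y) \<noteq> {}"
  using Rparts by simp

lemma orient_adj: "x \<in> V \<Longrightarrow> y \<in> V \<Longrightarrow> adj x y \<Longrightarrow> pierce (F x) (F y) \<or> pierce (F y) (F x)"
proof -
  assume x: "x \<in> V" and y: "y \<in> V" and a: "adj x y"
  have ne: "x \<noteq> y" using a G unfolding simple_graph_def by blast
  show ?thesis
  proof (rule orient)
    show "valid_frame (F x)" "valid_frame (F y)" using valid x y by auto
    show "corners (F x) \<inter> frame_set (F y) = {}" "corners (F y) \<inter> frame_set (F x) = {}"
      "left_side (F x) \<inter> frame_set (F y) = {}" "left_side (F y) \<inter> frame_set (F x) = {}"
      "right_side (F x) \<inter> frame_set (F y) \<noteq> {} \<longrightarrow>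
        right_side (F x) \<inter> top_side (F y) \<noteq> {} \<and> right_side (F x) \<inter> bottom_side (F y) \<noteq> {}"
      "right_side (F y) \<inter> frame_set (F x) \<noteq> {} \<longrightarrow>
        right_side (F y) \<inter> top_side (F x) \<noteq> {} \<and> right_side (F y) \<inter> bottom_side (F x) \<noteq> {}"
      using corn[OF x y ne] corn[OF y x ne[symmetric]] lft[OF x y ne] lft[OF y x ne[symmetric]] rgt[OF x y ne] rgt[OF y x ne[symmetric]] by auto
    show "frame_set (F x) \<inter> frame_set (F y) \<noteq> {}" using adj_iff x y ne a by blast
  qed
qed

abbreviation "n \<equiv> length cs"

lemma n3: "n \<ge> 3" using C unfolding induced_cycle_def by simp
lemma dist: "distinct cs" using C unfolding induced_cycle_def by simp
lemma inV: "i < n \<Longrightarrow> cs ! i \<in> V" using C unfolding induced_cycle_def by auto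
lemma adjc: "i < n \<Longrightarrow> j < n \<Longrightarrow> adj (cs!i) (cs!j) \<longleftrightarrow> (j = Suc i mod n \<or> i = Suc j mod n)"
  using C unfolding induced_cycle_def by simp

lemma no_self_contain: "valid_frame A \<Longrightarrow> \<not> frame_contains A A"
  using contains_antisym by blast

lemma part2:
  assumes v: "v \<in> set cs" and u: "u \<in> set cs" and uv: "u \<noteq> v"
    and Pv: "\<forall>w\<in>set cs - closed_nbhd adj v. frame_contains (F v) (F w)"
    and Pu: "\<forall>w\<in>set cs - closed_nbhd adj u. frame_contains (F u) (F w)"
  shows "adj u v"
proof (rule ccontr)
  assume na: "\<not> adj u v"
  then have "\<not> adj v u" using symm by blast
  then have "u \<in> set cs - closed_nbhd adj v" "v \<in> set cs - closed_nbhd adj u"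
    using u v uv na unfolding closed_nbhd_def by auto
  then have "frame_contains (F v) (F u)" "frame_contains (F u) (F v)" using Pu Pv by auto
  moreover have "u \<in> V" "v \<in> V" using u v C unfolding induced_cycle_def by auto
  ultimately show False using contains_antisym valid by metis
qed

lemma n0: "n > 0" using n3 by linarith

lemma cs_ne: "cs \<noteq> []" using n0 by auto

lemma nx_adj: "l < n \<Longrightarrow> adj (cs!l) (cs!(Suc l mod n))"
  using adjc[of l "Suc l mod n"] mod_less_divisor[OF n0] by simp

lemma prop_all:
  assumes i: "i < n" and j: "j < n" and cont: "frame_contains (F (cs!i)) (F (cs!j))"
  shows "\<forall>w\<in>set cs - closed_nbhd adj (cs!i). frame_contains (F (cs!i)) (F w)"
proof -
  define idx where "idx d = (i + d) mod n" for d
  define v where "v = cs!i"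
  have idx_lt: "idx d < n" for d using n0 by (simp add: idx_def)
  have idx_suc: "idx (Suc d) = Suc (idx d) mod n" for d by (simp add: idx_def mod_Suc_eq)
  have idx_inj: "d = d'" if "d < n" "d' < n" "idx d = idx d'" for d d'
    using mod2[of "i+d" n] mod2[of "i+d'" n] i that unfolding idx_def by (auto split: if_split_asm)
  have idx_surj: "\<exists>d<n. idx d = l" if "l < n" for l
  proof (cases "i \<le> l")
    case True
    then show ?thesis using that by (intro exI[of _ "l - i"]) (auto simp: idx_def)
  next
    case False
    have "i + (l + n - i) = l + n" using False that i by simp
    then have "(i + (l + n - i)) mod n = l" using that by simp
    then show ?thesis using False that i by (intro exI[of _ "l + n - i"]) (auto simp: idx_def)
  qed
  have idx0: "idx 0 = i" using i by (simp add: idx_def)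
  have idxn: "idx n = i" using i by (simp add: idx_def)
  have adjs: "adj (cs!(idx d)) (cs!(idx (Suc d)))" for d using nx_adj[OF idx_lt[of d]] idx_suc by simp
  have elem_eq: "d = d'" if "d < n" "d' < n" "cs!(idx d) = cs!(idx d')" for d d'
    using that dist idx_lt idx_inj nth_eq_iff_index_eq by metis
  have v0: "v = cs!(idx 0)" using idx0 v_def by simp
  have notnb: "cs!(idx d) \<noteq> v \<and> \<not> adj v (cs!(idx d))" if "2 \<le> d" "d \<le> n - 2" for d
  proof
    have "d < n" using that n3 by linarith
    then show "cs!(idx d) \<noteq> v" using elem_eq[of d 0] that n0 v0 by auto
    show "\<not> adj v (cs!(idx d))"
    proof
      assume "adj v (cs!(idx d))"
      then have "idx d = Suc i mod n \<or> i = Suc (idx d) mod n"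
        using adjc[OF i idx_lt[of d]] v_def by simp
      then have "idx d = idx 1 \<or> idx 0 = idx (Suc d)" using idx_suc[of 0] idx_suc[of d] idx0 by simp
      moreover have "d < n" "Suc d < n" "1 < n" using that n3 by linarith+
      ultimately show False using idx_inj[of d 1] idx_inj[of 0 "Suc d"] that cs_ne by auto
    qed
  qed
  have nb_range: "\<exists>d. 2 \<le> d \<and> d \<le> n - 2 \<and> w = cs!(idx d)"
    if w: "w \<in> set cs" "w \<noteq> v" "\<not> adj v w" for w
  proof -
    obtain l where l: "l < n" "w = cs!l" using w(1) by (auto simp: in_set_conv_nth)
    obtain d where d: "d < n" "idx d = l" using idx_surj[OF l(1)] by blast
    have "d \<noteq> 0" using d l w(2) v0 by (metis)
    moreover have "d \<noteq> 1" using adjs[of 0] d l w(3) v0 by auto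
    moreover have "d \<noteq> n - 1"
    proof
      assume "d = n - 1"
      then have "Suc d = n" using n0 by simp
      then have "adj w v" using adjs[of d] d l idxn v_def by simp
      then show False using w(3) symm by blast
    qed
    ultimately show ?thesis using d l by (intro exI[of _ d]) auto
  qed
  define good where "good d \<longleftrightarrow> frame_contains (F v) (F (cs!(idx d)))" for d
  have step: "good d'" if g: "good d" and r: "2 \<le> d'" "d' \<le> n - 2" and dd: "d' = Suc d \<or> d = Suc d'" for d d'
  proof -
    have a: "adj (cs!(idx d)) (cs!(idx d'))" using dd adjs[of d] adjs[of d'] symm by blast
    have inx: "cs!(idx d) \<in> V" "cs!(idx d') \<in> V" "v \<in> V" using inV idx_lt i v_def by auto
    have ne: "cs!(idx d) \<noteq> cs!(idx d')" using a G unfolding simple_graph_def by blast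
    have int: "frame_set (F (cs!(idx d))) \<inter> frame_set (F (cs!(idx d'))) \<noteq> {}"
      using adj_iff[OF inx(1,2) ne] a by blast
    have nn: "cs!(idx d') \<noteq> v" "\<not> adj v (cs!(idx d'))" using notnb[OF r] by auto
    have dis: "frame_set (F v) \<inter> frame_set (F (cs!(idx d'))) = {}"
      using adj_iff[OF inx(3,2)] nn by metis
    show ?thesis using propagate[OF valid[OF inx(2)] g[unfolded good_def] int dis] unfolding good_def .
  qed
  have jnb: "cs!j \<noteq> v" "\<not> adj v (cs!j)"
  proof -
    have vv: "valid_frame (F v)" "v \<in> V" "cs!j \<in> V" using valid inV i j v_def by auto
    show ne: "cs!j \<noteq> v" using no_self_contain[OF vv(1)] cont v_def by auto
    show "\<not> adj v (cs!j)"
      using adj_iff[OF vv(2,3) ne[symmetric]] cont v_def unfolding frame_contains_def by auto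
  qed
  obtain t where t: "2 \<le> t" "t \<le> n - 2" "cs!j = cs!(idx t)"
    using nb_range[of "cs!j"] jnb j by auto
  have gt: "good t"
  proof -
    obtain tt where "tt < n" "idx tt = j" using idx_surj[OF j] by blast
    then show ?thesis using t cont v_def unfolding good_def by simp
  qed
  have up: "t + e \<le> n - 2 \<longrightarrow> good (t + e)" for e
  proof (induction e)
    case 0 then show ?case using gt by simp
  next
    case (Suc e) then show ?case using step[of "t+e" "t + Suc e"] t by auto
  qed
  have down: "e + 2 \<le> t \<longrightarrow> good (t - e)" for e
  proof (induction e)
    case 0 then show ?case using gt by simp
  next
    case (Suc e)
    show ?case
    proof
      assume h: "Suc e + 2 \<le> t"
      then have "good (t - e)" using Suc by simp
      moreover have "t - e = Suc (t - Suc e)" using h by simp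
      ultimately show "good (t - Suc e)" using step[of "t - e" "t - Suc e"] h t by auto
    qed
  qed
  show ?thesis
  proof
    fix w assume w: "w \<in> set cs - closed_nbhd adj (cs!i)"
    then have "w \<in> set cs" "w \<noteq> v" "\<not> adj v w" unfolding closed_nbhd_def v_def by auto
    then obtain d where d: "2 \<le> d" "d \<le> n - 2" "w = cs!(idx d)" using nb_range by blast
    have "good d"
    proof (cases "t \<le> d")
      case True then show ?thesis using up[of "d - t"] d by simp
    next
      case False then show ?thesis using down[of "t - d"] d by simp
    qed
    then show "frame_contains (F (cs!i)) (F w)" using d v_def unfolding good_def by simp
  qed
qed

lemma part1: "\<exists>v\<in>set cs. \<forall>w\<in>set cs - closed_nbhd adj v. frame_contains (F v) (F w)"
proof (cases "n = 3")
  case True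
  have "\<forall>w\<in>set cs - closed_nbhd adj (cs!0). frame_contains (F (cs!0)) (F w)"
  proof
    fix w assume w: "w \<in> set cs - closed_nbhd adj (cs!0)"
    then obtain l where l: "l < 3" "w = cs!l" using True by (auto simp: in_set_conv_nth)
    have "l = 0 \<or> l = 1 \<or> l = 2" using l by auto
    moreover have "adj (cs!0) (cs!1)" "adj (cs!0) (cs!2)" using adjc[of 0 1] adjc[of 0 2] True by auto
    ultimately have "w \<in> closed_nbhd adj (cs!0)" using l unfolding closed_nbhd_def by auto
    then show "frame_contains (F (cs!0)) (F w)" using w by blast
  qed
  then show ?thesis using n0 by (meson nth_mem)
next
  case False
  then have n4: "n \<ge> 4" using n3 by simp
  define f where "f j = fx1 (F (cs!j))" for j
  have fin: "finite (f ` {..<n})" "f ` {..<n} \<noteq> {}" using n0 by auto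
  obtain k where k: "k < n" "f k = Max (f ` {..<n})" using Max_in[OF fin] by auto
  have kmax: "f j \<le> f k" if "j < n" for j using k(2) Max_ge[OF fin(1)] that by auto
  define a where "a = (k + n - 1) mod n"
  define c where "c = Suc k mod n"
  have ha: "a = (if k = 0 then n - 1 else k - 1)" using mod2[of "k+n-1" n] k n4 unfolding a_def by auto
  have hc: "c = (if k = n - 1 then 0 else k + 1)" using mod2[of "Suc k" n] k n4 unfolding c_def by auto
  have an: "a < n" "c < n" using ha hc k n4 by auto
  have hsa: "Suc a mod n = k" using mod2[of "Suc a" n] ha k n4 by auto
  have hsc: "Suc c mod n = (if Suc c = n then 0 else Suc c)" using mod2[of "Suc c" n] an by auto
  have ak: "adj (cs!a) (cs!k)" using adjc[OF an(1) k(1)] hsa by simp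
  have ck: "adj (cs!c) (cs!k)" using nx_adj[OF k(1)] symm unfolding c_def by blast
  have inx: "cs!a \<in> V" "cs!c \<in> V" "cs!k \<in> V" using inV an k by auto
  have pa: "pierce (F (cs!a)) (F (cs!k))"
    using orient_adj[OF inx(1,3) ak] kmax[OF an(1)] unfolding pierce_def f_def by auto
  have pc: "pierce (F (cs!c)) (F (cs!k))"
    using orient_adj[OF inx(2,3) ck] kmax[OF an(2)] unfolding pierce_def f_def by auto
  have neq: "a \<noteq> c" "c \<noteq> Suc a mod n" "a \<noteq> Suc c mod n"
    using ha hc hsa hsc k n4 by (auto split: if_split_asm)
  have ne: "cs!a \<noteq> cs!c" using dist an neq(1) nth_eq_iff_index_eq by metis
  have na: "\<not> adj (cs!a) (cs!c)" using adjc[OF an] neq by auto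
  have dis: "frame_set (F (cs!a)) \<inter> frame_set (F (cs!c)) = {}" using adj_iff[OF inx(1,2) ne] na by blast
  have "frame_contains (F (cs!a)) (F (cs!c)) \<or> frame_contains (F (cs!c)) (F (cs!a))"
    using lemB[OF valid[OF inx(1)] valid[OF inx(2)] valid[OF inx(3)] pa pc dis] .
  then show ?thesis
  proof
    assume "frame_contains (F (cs!a)) (F (cs!c))"
    then show ?thesis using prop_all[OF an] an(1) by (meson nth_mem)
  next
    assume "frame_contains (F (cs!c)) (F (cs!a))"
    then show ?thesis using prop_all[OF an(2,1)] an(2) by (meson nth_mem)
  qed
qed

end

theorem lemma3p7:
  fixes V :: "'v set" and adj :: "'v \<Rightarrow> 'v \<Rightarrow> bool" and F :: "'v \<Rightarrow> frame" and cs :: "'v list"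
  assumes "simple_graph V adj"
    and "restricted_frame_rep V adj F"
    and "induced_cycle V adj cs"
  shows "\<exists>v\<in>set cs.
           (\<forall>w\<in>set cs - closed_nbhd adj v. frame_contains (F v) (F w)) \<and>
           (\<forall>u\<in>set cs. u \<noteq> v \<and> (\<forall>w\<in>set cs - closed_nbhd adj u. frame_contains (F u) (F w))
               \<longrightarrow> adj u v)"
proof -
  obtain v where v: "v \<in> set cs" "\<forall>w\<in>set cs - closed_nbhd adj v. frame_contains (F v) (F w)"
    using part1[OF assms] by blast
  show ?thesis using v part2[OF assms v(1) _ _ v(2)] by blast
qed

end
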